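(* Fix an integer $\ell\ge2$ and a real $p\in(0,1)$, and let $Y$ be the number of permutations of $G_{k,\ell}(m)$. Then, as $k\to\infty$, \[ \mathbb{E}[Y]\sim (k!)^\ell\, p^{k\ell}\exp\left\{\frac{\ell}{2}\left(1-\frac1p\right)\right\} f_\ell(1/p). \]
   Context: For integers $k\ge1$, $\ell\ge2$, $D_{k,\ell}$ is the digraph with vertex set $\{v_{i,j}: i\in[k], j\in[\ell]\}$ in which $(v_{i,j},v_{i',j'})$ is an arc if and only if $j'\equiv j+1 \pmod \ell$; it has $k^2\ell$ arcs. Given $p\in(0,1)$, let $m=\lfloor pk^2\ell\rfloor$ and let $G_{k,\ell}(m)$ be a spanning subgraph of $D_{k,\ell}$ chosen uniformly at random among those with exactly $m$ arcs. A permutation in a digraph $G=(V,E)$ is a bijection $f:V\to V$ such that for every $v$ either $f(v)=v$ or $(v,f(v))\in E$. $f_\ell(x):=\sum_{i=0}^{\infty}\frac{x^{i\ell}}{(i!)^\ell}$. Asymptotics are as $k\to\infty$ with $\ell,p$ fixed; $A\sim B$ means $A/B\to1$. *)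

theory Defs
  imports "HOL-Probability.Probability" "HOL-Library.Landau_Symbols"
begin

text \<open>Vertex v_{i,j} is represented by the pair (i,j) with i < k, j < l (0-based).\<close>
definition Dverts :: "nat \<Rightarrow> nat \<Rightarrow> (nat \<times> nat) set" where
  "Dverts k l = {..<k} \<times> {..<l}"

definition Darcs :: "nat \<Rightarrow> nat \<Rightarrow> ((nat \<times> nat) \<times> (nat \<times> nat)) set" where
  "Darcs k l = {(u, w). u \<in> Dverts k l \<and> w \<in> Dverts k l \<and> snd w = (snd u + 1) mod l}"

text \<open>Permutations of the digraph (V,E): bijections f of V with f v = v or (v, f v) an arc.
  Functions are taken extensional (undefined outside V) so that they are counted once.\<close>
definition digraph_perms :: "'a set \<Rightarrow> ('a \<times> 'a) set \<Rightarrow> ('a \<Rightarrow> 'a) set" where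
  "digraph_perms V E = {f \<in> V \<rightarrow>\<^sub>E V. bij_betw f V V \<and> (\<forall>v\<in>V. f v = v \<or> (v, f v) \<in> E)}"

text \<open>Spanning subgraphs of D_{k,l} with exactly m arcs (identified with their arc sets).\<close>
definition subgraphs_m :: "nat \<Rightarrow> nat \<Rightarrow> nat \<Rightarrow> ((nat \<times> nat) \<times> (nat \<times> nat)) set set" where
  "subgraphs_m k l m = {E. E \<subseteq> Darcs k l \<and> card E = m}"

definition f_ell :: "nat \<Rightarrow> real \<Rightarrow> real" where
  "f_ell l x = (\<Sum>i. x ^ (i * l) / (fact i) ^ l)"

definition EY :: "nat \<Rightarrow> real \<Rightarrow> nat \<Rightarrow> real" where
  "EY l p k = measure_pmf.expectation
      (pmf_of_set (subgraphs_m k l (nat \<lfloor>p * real (k\<^sup>2 * l)\<rfloor>)))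
      (\<lambda>E. real (card (digraph_perms (Dverts k l) E)))"

end

theory Submission
  imports Defs "HOL-Real_Asymp.Real_Asymp"
begin


lemma sum_lessThan_real: "(\<Sum>i<n. real i) = real n * (real n - 1) / 2"
  by (induction n) (auto simp: field_simps)

lemma prod_exp_bounds:
  fixes y :: "nat \<Rightarrow> real"
  assumes "\<And>i. i < n \<Longrightarrow> 0 \<le> y i \<and> y i \<le> 1/2"
  shows "exp (-(\<Sum>i<n. y i) - 2*(\<Sum>i<n. (y i)^2)) \<le> (\<Prod>i<n. 1 - y i)"
    and "(\<Prod>i<n. 1 - y i) \<le> exp (-(\<Sum>i<n. y i))"
proof -
  have "exp (-(\<Sum>i<n. y i) - 2*(\<Sum>i<n. (y i)^2)) = (\<Prod>i<n. exp (- y i - 2 * (y i)^2))"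
    by (simp add: exp_sum[symmetric] sum_subtractf sum_distrib_left sum_negf)
  also have "\<dots> \<le> (\<Prod>i<n. 1 - y i)"
  proof (rule prod_mono)
    fix i assume "i \<in> {..<n}"
    with assms have a: "0 \<le> y i" "y i \<le> 1/2" by auto
    have "exp (- y i - 2 * (y i)^2) \<le> exp (ln (1 - y i))"
      using ln_one_minus_pos_lower_bound[OF a] by simp
    also have "\<dots> = 1 - y i" using a by simp
    finally show "0 \<le> exp (- y i - 2 * (y i)^2) \<and> exp (- y i - 2 * (y i)^2) \<le> 1 - y i"
      by simp
  qed
  finally show "exp (-(\<Sum>i<n. y i) - 2*(\<Sum>i<n. (y i)^2)) \<le> (\<Prod>i<n. 1 - y i)" .
  have "(\<Prod>i<n. 1 - y i) \<le> (\<Prod>i<n. exp (- y i))"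
  proof (rule prod_mono)
    fix i assume "i \<in> {..<n}"
    with assms have a: "0 \<le> y i" "y i \<le> 1/2" by auto
    show "0 \<le> 1 - y i \<and> 1 - y i \<le> exp (- y i)"
      using a exp_ge_add_one_self[of "- y i"] by simp
  qed
  also have "\<dots> = exp (-(\<Sum>i<n. y i))"
    by (simp add: exp_sum[symmetric] sum_negf)
  finally show "(\<Prod>i<n. 1 - y i) \<le> exp (-(\<Sum>i<n. y i))" .
qed

definition mm :: "nat \<Rightarrow> real \<Rightarrow> nat \<Rightarrow> nat" where
  "mm l p k = nat \<lfloor>p * real (k\<^sup>2 * l)\<rfloor>"

definition RR :: "nat \<Rightarrow> real \<Rightarrow> nat \<Rightarrow> nat \<Rightarrow> real" where
  "RR l p k n = (\<Prod>i<n. (real (mm l p k) - real i) / (p * (real (k\<^sup>2 * l) - real i)))"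

lemma mm_bounds:
  assumes "0 < p"
  shows "real (mm l p k) \<le> p * real (k\<^sup>2 * l)" "p * real (k\<^sup>2 * l) - 1 < real (mm l p k)"
proof -
  have nn: "0 \<le> p * real (k\<^sup>2 * l)" using assms by simp
  show "real (mm l p k) \<le> p * real (k\<^sup>2 * l)"
    unfolding mm_def using nn by linarith
  show "p * real (k\<^sup>2 * l) - 1 < real (mm l p k)"
    unfolding mm_def using nn by linarith
qed



lemma RR_factor_bounds:
  assumes p: "0 < p" "p < 1" and i: "i < k*l" and km: "k*l \<le> mm l p k" and kl: "k*l < k\<^sup>2*l"
  shows "0 \<le> (real (mm l p k) - real i) / (p * (real (k\<^sup>2 * l) - real i))"
    "(real (mm l p k) - real i) / (p * (real (k\<^sup>2 * l) - real i)) \<le> 1"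
proof -
  have "i < k\<^sup>2*l" using i kl by linarith
  then have "real i < real (k\<^sup>2*l)" by (simp only: of_nat_less_iff)
  then have d: "0 < p * (real (k\<^sup>2 * l) - real i)" using p by simp
  have "real i < real (mm l p k)" using i km by linarith
  then show "0 \<le> (real (mm l p k) - real i) / (p * (real (k\<^sup>2 * l) - real i))"
    using d by simp
  have "real (mm l p k) - real i \<le> p * (real (k\<^sup>2 * l) - real i)"
  proof -
    have "p * real i \<le> real i" using p by (simp add: mult_left_le_one_le)
    then show ?thesis using mm_bounds(1)[OF p(1), where l=l and k=k] by (simp add: algebra_simps)
  qed
  then show "(real (mm l p k) - real i) / (p * (real (k\<^sup>2 * l) - real i)) \<le> 1"
    using d by simp
qed

lemma RR_bounds:
  assumes p: "0 < p" "p < 1" and n: "n \<le> k*l" and km: "k*l \<le> mm l p k" and kl: "k*l < k\<^sup>2*l"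
  shows "0 \<le> RR l p k n" "RR l p k n \<le> 1"
proof -
  show "0 \<le> RR l p k n" unfolding RR_def
    by (rule prod_nonneg) (use RR_factor_bounds[OF p _ km kl] n in auto)
  show "RR l p k n \<le> 1" unfolding RR_def
    by (rule prod_le_1) (use RR_factor_bounds[OF p _ km kl] n in auto)
qed

lemma eventually_km:
  assumes p: "0 < p" "p < 1" and l: "0 < l"
  shows "eventually (\<lambda>k. k*l \<le> mm l p k \<and> k*l < k\<^sup>2*l) at_top"
proof -
  have "eventually (\<lambda>k. k \<ge> nat \<lceil>2/p\<rceil> + 2) at_top" by (rule eventually_ge_at_top)
  then show ?thesis
  proof eventually_elim
    case (elim k)
    have k2: "k \<ge> 2" using elim by simp
    have "2/p \<le> real k" using elim by linarith
    then have pk: "2 \<le> p * real k" using p by (simp add: field_simps)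
    have "real (k*l) \<le> p * real (k\<^sup>2 * l) - 1"
    proof -
      have "p * real (k\<^sup>2 * l) = (p * real k) * (real k * real l)" by (simp add: power2_eq_square)
      also have "\<dots> \<ge> 2 * (real k * real l)"
        using pk by (intro mult_right_mono) auto
      finally have "2 * (real k * real l) \<le> p * real (k\<^sup>2 * l)" .
      moreover have "(1::nat) \<le> k*l" using k2 l by (simp add: Suc_le_eq)
      then have "1 \<le> real k * real l" by (metis of_nat_1 of_nat_le_iff of_nat_mult)
      ultimately show ?thesis by simp
    qed
    then have "real (k*l) < real (mm l p k)" using mm_bounds(2)[OF p(1), where l=l and k=k] by linarith
    then have "k*l \<le> mm l p k" by (simp only: of_nat_less_iff)
    moreover have "k*l < k\<^sup>2*l" using k2 l by (simp add: power2_eq_square)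
    ultimately show ?case by simp
  qed
qed



lemma RR_lim:
  assumes p: "0 < p" "p < 1" and l: "0 < l"
  shows "(\<lambda>k. RR l p k ((k - t) * l)) \<longlonglongrightarrow> exp (real l / 2 * (1 - 1 / p))"
proof -
  define nr where "nr = (\<lambda>k::nat. (real k - real t) * real l)"
  define Nr where "Nr = (\<lambda>k::nat. real k * real k * real l)"
  define del where "del = (\<lambda>k::nat. (1 + real k * real l) / (p * (Nr k - real k * real l)))"
  define UB where "UB = (\<lambda>k. exp (- ((1 - p) * (nr k * (nr k - 1) / 2) / (p * Nr k))))"
  define LB where "LB = (\<lambda>k. exp (- ((nr k + (1 - p) * (nr k * (nr k - 1) / 2)) / (p * (Nr k - real k * real l)))
       - 2 * (real k * real l * (del k)\<^sup>2)))"
  have lr: "0 < real l" using l by simp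
  have c: "exp (real l / 2 * (1 - 1 / p)) = exp (- ((1 - p) * real l / (2 * p)))"
    using p by (simp add: field_simps)
  have UBl: "UB \<longlonglongrightarrow> exp (- ((1 - p) * real l / (2 * p)))"
    unfolding UB_def nr_def Nr_def using lr p by (real_asymp simp: field_simps)
  have LBl: "LB \<longlonglongrightarrow> exp (- ((1 - p) * real l / (2 * p)))"
    unfolding LB_def nr_def Nr_def del_def using lr p by (real_asymp simp: field_simps)
  have "del \<longlonglongrightarrow> 0"
    unfolding nr_def Nr_def del_def using lr p by (real_asymp simp: field_simps)
  then have "eventually (\<lambda>k. del k < 1/2) at_top"
    by (rule order_tendstoD(2)) simp
  then have evd: "eventually (\<lambda>k. del k \<le> 1/2) at_top"
    by (rule eventually_mono) simp
  have ev: "eventually (\<lambda>k. LB k \<le> RR l p k ((k - t) * l) \<and> RR l p k ((k - t) * l) \<le> UB k) at_top"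
    using eventually_km[OF p l] evd eventually_ge_at_top[of t]
  proof eventually_elim
    case (elim k)
    define n where "n = (k - t) * l"
    define m where "m = real (mm l p k)"
    define N where "N = real (k\<^sup>2 * l)"
    have nn: "real n = nr k" unfolding n_def nr_def using elim by (simp add: of_nat_diff)
    have NN: "N = Nr k" unfolding N_def Nr_def by (simp add: power2_eq_square)
    have nkl: "n \<le> k * l" unfolding n_def by simp
    have klN: "real k * real l < N" using elim unfolding N_def
      by (metis of_nat_less_iff of_nat_mult)
    have mN: "m \<le> p * N" "p * N - 1 < m" unfolding m_def N_def using mm_bounds[OF p(1)] by auto
    define y where "y = (\<lambda>i. 1 - (m - real i) / (p * (N - real i)))"
    have RRy: "RR l p k n = (\<Prod>i<n. 1 - y i)"
      unfolding RR_def y_def m_def N_def by simp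
    have pos: "0 < N - real k * real l" using klN by simp
    have yi: "real i * (1 - p) / (p * N) \<le> y i \<and> y i \<le> (1 + real i * (1 - p)) / (p * (N - real k * real l))
               \<and> y i \<le> del k \<and> 0 \<le> y i" if "i < n" for i
    proof -
      have ikl: "real i < real k * real l" using that nkl
        by (metis le_trans not_le of_nat_le_iff of_nat_mult)
      have Ni: "0 < N - real i" using ikl klN by simp
      have ye: "y i = ((p * N - m) + real i * (1 - p)) / (p * (N - real i))"
        unfolding y_def using Ni p by (simp add: field_simps)
      have num0: "0 \<le> (p * N - m) + real i * (1 - p)" using mN p by simp
      have "real i * (1 - p) / (p * N) \<le> real i * (1 - p) / (p * (N - real i))"
        using Ni p by (intro divide_left_mono mult_nonneg_nonneg mult_pos_pos) auto
      also have "\<dots> \<le> y i" unfolding ye using Ni p mN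
        by (intro divide_right_mono) auto
      finally have 1: "real i * (1 - p) / (p * N) \<le> y i" .
      have "y i \<le> (1 + real i * (1 - p)) / (p * (N - real i))"
        unfolding ye using Ni p mN by (intro divide_right_mono) auto
      also have "\<dots> \<le> (1 + real i * (1 - p)) / (p * (N - real k * real l))"
        using Ni p ikl pos by (intro divide_left_mono mult_nonneg_nonneg mult_pos_pos add_nonneg_nonneg mult_left_mono) auto
      finally have 2: "y i \<le> (1 + real i * (1 - p)) / (p * (N - real k * real l))" .
      have "(1 + real i * (1 - p)) \<le> 1 + real k * real l"
      proof -
        have "0 \<le> real i * p" using p by simp
        moreover have "real i * (1 - p) = real i - real i * p" by (simp add: algebra_simps)
        ultimately show ?thesis using ikl by linarith
      qed
      then have "(1 + real i * (1 - p)) / (p * (N - real k * real l)) \<le> del k"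
        unfolding del_def NN[symmetric] using pos p by (intro divide_right_mono) auto
      with 2 have 3: "y i \<le> del k" by simp
      have 4: "0 \<le> y i" unfolding ye using Ni p num0 by simp
      show ?thesis using 1 2 3 4 by simp
    qed
    have sl: "(\<Sum>i<n. y i) \<ge> (1 - p) * (nr k * (nr k - 1) / 2) / (p * Nr k)"
    proof -
      have "(\<Sum>i<n. y i) \<ge> (\<Sum>i<n. real i * (1 - p) / (p * N))"
        using yi by (intro sum_mono) auto
      moreover have "(\<Sum>i<n. real i * (1 - p) / (p * N)) = (1 - p) * (\<Sum>i<n. real i) / (p * N)"
        by (simp add: sum_divide_distrib[symmetric] sum_distrib_right[symmetric] mult.commute)
      ultimately show ?thesis using sum_lessThan_real[of n] nn NN by simp
    qed
    have su: "(\<Sum>i<n. y i) \<le> (nr k + (1 - p) * (nr k * (nr k - 1) / 2)) / (p * (Nr k - real k * real l))"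
    proof -
      have "(\<Sum>i<n. y i) \<le> (\<Sum>i<n. (1 + real i * (1 - p)) / (p * (N - real k * real l)))"
        using yi by (intro sum_mono) auto
      moreover have "(\<Sum>i<n. (1 + real i * (1 - p)) / (p * (N - real k * real l)))
          = (real n + (1 - p) * (\<Sum>i<n. real i)) / (p * (N - real k * real l))"
        by (simp add: sum_divide_distrib[symmetric] sum.distrib sum_distrib_right[symmetric] mult.commute)
      ultimately show ?thesis using sum_lessThan_real[of n] nn NN by simp
    qed
    have sq: "(\<Sum>i<n. (y i)\<^sup>2) \<le> real k * real l * (del k)\<^sup>2"
    proof -
      have "(\<Sum>i<n. (y i)\<^sup>2) \<le> (\<Sum>i<n. (del k)\<^sup>2)"
        using yi by (intro sum_mono power_mono) auto
      also have "\<dots> = real n * (del k)\<^sup>2" by simp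
      also have "\<dots> \<le> real k * real l * (del k)\<^sup>2"
        using nkl by (intro mult_right_mono) (auto simp flip: of_nat_mult)
      finally show ?thesis .
    qed
    have yb: "\<And>i. i < n \<Longrightarrow> 0 \<le> y i \<and> y i \<le> 1/2" using yi elim by fastforce
    have "LB k \<le> exp (-(\<Sum>i<n. y i) - 2*(\<Sum>i<n. (y i)^2))"
      unfolding LB_def using su sq by simp
    also have "\<dots> \<le> RR l p k n" unfolding RRy by (rule prod_exp_bounds(1)[OF yb])
    finally have 1: "LB k \<le> RR l p k n" .
    have "RR l p k n \<le> exp (-(\<Sum>i<n. y i))" unfolding RRy by (rule prod_exp_bounds(2)[OF yb])
    also have "\<dots> \<le> UB k" unfolding UB_def using sl by simp
    finally show ?case using 1 unfolding n_def by simp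
  qed
  have e1: "eventually (\<lambda>k. LB k \<le> RR l p k ((k - t) * l)) at_top"
    using ev by (rule eventually_mono) simp
  have e2: "eventually (\<lambda>k. RR l p k ((k - t) * l) \<le> UB k) at_top"
    using ev by (rule eventually_mono) simp
  show ?thesis unfolding c by (rule tendsto_sandwich[OF e1 e2 LBl UBl])
qed



lemma finite_Dverts[simp]: "finite (Dverts k l)"
  unfolding Dverts_def by simp

lemma card_Dverts: "card (Dverts k l) = k * l"
  unfolding Dverts_def by (simp add: card_cartesian_product)

lemma finite_Darcs[simp]: "finite (Darcs k l)"
proof -
  have "Darcs k l \<subseteq> Dverts k l \<times> Dverts k l" unfolding Darcs_def by auto
  then show ?thesis by (rule finite_subset) simp
qed

lemma card_Darcs:
  assumes "0 < l"
  shows "card (Darcs k l) = k\<^sup>2 * l"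
proof -
  have "bij_betw (\<lambda>(u,w). (u, fst w)) (Darcs k l) (Dverts k l \<times> {..<k})"
  proof (rule bij_betw_byWitness[where f'="\<lambda>(u,i). (u, (i, (snd u + 1) mod l))"])
    show "\<forall>a\<in>Darcs k l. (case (case a of (u, w) \<Rightarrow> (u, fst w)) of (u, i) \<Rightarrow> (u, i, (snd u + 1) mod l)) = a"
      unfolding Darcs_def by auto
    show "\<forall>a'\<in>Dverts k l \<times> {..<k}. (case (case a' of (u, i) \<Rightarrow> (u, i, (snd u + 1) mod l)) of (u, w) \<Rightarrow> (u, fst w)) = a'"
      by auto
    show "(\<lambda>(u, w). (u, fst w)) ` Darcs k l \<subseteq> Dverts k l \<times> {..<k}"
      unfolding Darcs_def Dverts_def by auto
    show "(\<lambda>(u, i). (u, i, (snd u + 1) mod l)) ` (Dverts k l \<times> {..<k}) \<subseteq> Darcs k l"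
      unfolding Darcs_def Dverts_def using assms by auto
  qed
  then have "card (Darcs k l) = card (Dverts k l \<times> {..<k})" by (rule bij_betw_same_card)
  also have "\<dots> = k\<^sup>2 * l" by (simp add: card_cartesian_product card_Dverts power2_eq_square)
  finally show ?thesis .
qed

definition Inj :: "'a set \<Rightarrow> 'b set \<Rightarrow> ('a \<Rightarrow> 'b) set" where
  "Inj X Y = {g \<in> X \<rightarrow>\<^sub>E Y. inj_on g X}"

lemma card_Inj:
  assumes "finite X" "finite Y" "card X = s" "card Y = s"
  shows "card (Inj X Y) = fact s"
proof -
  have "card (Inj X Y) = card Y ^ (card X - card X) * prod ((-) (card Y)) {0..<card X}"
    unfolding Inj_def by (rule card_inj_on_subset_funcset) (use assms in auto)
  also have "\<dots> = fact s" using assms by (simp add: fact_prod_rev)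
  finally show ?thesis .
qed

lemma finite_Inj[simp]: "finite X \<Longrightarrow> finite Y \<Longrightarrow> finite (Inj X Y)"
  unfolding Inj_def by (simp add: finite_PiE)



lemma Suc_mod_neq: "2 \<le> l \<Longrightarrow> j < l \<Longrightarrow> Suc j mod l \<noteq> j"
  by (auto simp: mod_Suc)

lemma Suc_mod_inj: "a < l \<Longrightarrow> b < l \<Longrightarrow> Suc a mod l = Suc b mod l \<Longrightarrow> a = b"
  by (auto simp: mod_Suc split: if_splits)

definition AF :: "nat \<Rightarrow> ((nat \<times> nat) \<Rightarrow> (nat \<times> nat)) \<Rightarrow> nat \<Rightarrow> nat set" where
  "AF k f j = {i. i < k \<and> f (i, j) \<noteq> (i, j)}"

abbreviation PP :: "nat \<Rightarrow> nat \<Rightarrow> ((nat \<times> nat) \<Rightarrow> (nat \<times> nat)) set" where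
  "PP k l \<equiv> digraph_perms (Dverts k l) (Darcs k l)"

lemma PP_D:
  assumes "f \<in> PP k l"
  shows "f \<in> Dverts k l \<rightarrow>\<^sub>E Dverts k l" "inj_on f (Dverts k l)" "f ` Dverts k l = Dverts k l"
    "\<And>v. v \<in> Dverts k l \<Longrightarrow> f v = v \<or> (v, f v) \<in> Darcs k l"
  using assms unfolding digraph_perms_def bij_betw_def by auto

lemma AF_step:
  assumes f: "f \<in> PP k l" and i: "i \<in> AF k f j" and j: "j < l"
  shows "f (i, j) = (fst (f (i, j)), Suc j mod l)" "fst (f (i, j)) < k"
proof -
  have v: "(i, j) \<in> Dverts k l" using i j unfolding AF_def Dverts_def by auto
  have "((i, j), f (i, j)) \<in> Darcs k l" using PP_D(4)[OF f v] i unfolding AF_def by auto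
  then show "f (i, j) = (fst (f (i, j)), Suc j mod l)" "fst (f (i, j)) < k"
    unfolding Darcs_def Dverts_def by auto
qed

lemma AF_bij:
  assumes f: "f \<in> PP k l" and l: "2 \<le> l" and j: "j < l"
  shows "bij_betw (\<lambda>i. fst (f (i, j))) (AF k f j) (AF k f (Suc j mod l))"
proof -
  note fD = PP_D[OF f]
  let ?j' = "Suc j mod l"
  have j': "?j' < l" using l by simp
  have into: "fst (f (i, j)) \<in> AF k f ?j'" if i: "i \<in> AF k f j" for i
  proof -
    let ?w = "f (i, j)"
    have v: "(i, j) \<in> Dverts k l" using i j unfolding AF_def Dverts_def by auto
    have w: "?w = (fst ?w, ?j')" "fst ?w < k" using AF_step[OF f i j] by auto
    have wV: "?w \<in> Dverts k l" using v fD(1) by auto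
    have "f ?w \<noteq> ?w"
    proof
      assume "f ?w = ?w"
      then have "f ?w = f (i, j)" by simp
      then have "?w = (i, j)" using fD(2) wV v by (auto dest: inj_onD)
      then show False using i unfolding AF_def by auto
    qed
    then show ?thesis using w unfolding AF_def by (metis (mono_tags, lifting) mem_Collect_eq)
  qed
  have inj: "inj_on (\<lambda>i. fst (f (i, j))) (AF k f j)"
  proof (rule inj_onI)
    fix a b assume a: "a \<in> AF k f j" and b: "b \<in> AF k f j" and e: "fst (f (a, j)) = fst (f (b, j))"
    have "f (a, j) = f (b, j)" using AF_step(1)[OF f a j] AF_step(1)[OF f b j] e by (metis)
    moreover have "(a, j) \<in> Dverts k l" "(b, j) \<in> Dverts k l"
      using a b j unfolding AF_def Dverts_def by auto
    ultimately show "a = b" using fD(2) by (auto dest: inj_onD)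
  qed
  have onto: "AF k f ?j' \<subseteq> (\<lambda>i. fst (f (i, j))) ` AF k f j"
  proof
    fix i' assume i': "i' \<in> AF k f ?j'"
    let ?w = "(i', ?j')"
    have wV: "?w \<in> Dverts k l" using i' j' unfolding AF_def Dverts_def by auto
    have fw: "f ?w \<noteq> ?w" using i' unfolding AF_def by auto
    obtain u where u: "u \<in> Dverts k l" "f u = ?w" using wV fD(3) by (metis imageE)
    have "u \<noteq> ?w" using u fw by auto
    then have "(u, f u) \<in> Darcs k l" using fD(4)[OF u(1)] u(2) by auto
    then have "Suc (snd u) mod l = ?j'" "snd u < l" using u unfolding Darcs_def Dverts_def by auto
    then have su: "snd u = j" using Suc_mod_inj j by blast
    have "fst u \<in> AF k f j" using u su \<open>u \<noteq> ?w\<close> unfolding AF_def Dverts_def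
      by (cases u) auto
    moreover have "fst (f (fst u, j)) = i'" using u su by (cases u) auto
    ultimately show "i' \<in> (\<lambda>i. fst (f (i, j))) ` AF k f j" by (metis image_eqI)
  qed
  show ?thesis unfolding bij_betw_def using inj into onto by auto
qed

lemma AF_card:
  assumes f: "f \<in> PP k l" and l: "2 \<le> l" and j: "j < l"
  shows "card (AF k f j) = card (AF k f 0)"
  using j
proof (induction j)
  case 0 then show ?case by simp
next
  case (Suc j)
  have "Suc j mod l = Suc j" using Suc.prems by simp
  then have "card (AF k f (Suc j)) = card (AF k f j)"
    using bij_betw_same_card[OF AF_bij[OF f l, of j]] Suc.prems by simp
  then show ?case using Suc by simp
qed



definition Ss :: "nat \<Rightarrow> nat \<Rightarrow> nat set set" where
  "Ss k s = {B. B \<subseteq> {..<k} \<and> card B = s}"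

definition Q :: "nat \<Rightarrow> nat \<Rightarrow> nat \<Rightarrow> ((nat \<Rightarrow> nat set) \<times> (nat \<Rightarrow> nat \<Rightarrow> nat)) set" where
  "Q k l s = Sigma (PiE {..<l} (\<lambda>_. Ss k s)) (\<lambda>A. PiE {..<l} (\<lambda>j. Inj (A j) (A (Suc j mod l))))"

definition Phi :: "nat \<Rightarrow> nat \<Rightarrow> (nat \<Rightarrow> nat set) \<times> (nat \<Rightarrow> nat \<Rightarrow> nat) \<Rightarrow> (nat \<times> nat) \<Rightarrow> (nat \<times> nat)" where
  "Phi k l = (\<lambda>(A, \<sigma>). \<lambda>v\<in>Dverts k l. if fst v \<in> A (snd v) then (\<sigma> (snd v) (fst v), Suc (snd v) mod l) else v)"

definition Psi :: "nat \<Rightarrow> nat \<Rightarrow> ((nat \<times> nat) \<Rightarrow> (nat \<times> nat)) \<Rightarrow> (nat \<Rightarrow> nat set) \<times> (nat \<Rightarrow> nat \<Rightarrow> nat)" where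
  "Psi k l f = (\<lambda>j\<in>{..<l}. AF k f j, \<lambda>j\<in>{..<l}. \<lambda>i\<in>AF k f j. fst (f (i, j)))"

definition Ps :: "nat \<Rightarrow> nat \<Rightarrow> nat \<Rightarrow> ((nat \<times> nat) \<Rightarrow> (nat \<times> nat)) set" where
  "Ps k l s = {f \<in> PP k l. card (AF k f 0) = s}"

lemma Q_D:
  assumes "(A, \<sigma>) \<in> Q k l s" "j < l"
  shows "A j \<subseteq> {..<k}" "card (A j) = s" "\<And>i. i \<in> A j \<Longrightarrow> \<sigma> j i \<in> A (Suc j mod l)"
    "inj_on (\<sigma> j) (A j)" "A \<in> extensional {..<l}" "\<sigma> \<in> extensional {..<l}" "\<sigma> j \<in> extensional (A j)"
  using assms unfolding Q_def Ss_def Inj_def by (auto simp: PiE_def Pi_def)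

lemma Phi_PP:
  assumes Q: "(A, \<sigma>) \<in> Q k l s" and l: "2 \<le> l"
  shows "Phi k l (A, \<sigma>) \<in> PP k l"
proof -
  define F where "F = Phi k l (A, \<sigma>)"
  have F: "F (i, j) = (if i \<in> A j then (\<sigma> j i, Suc j mod l) else (i, j))" if "(i, j) \<in> Dverts k l" for i j
    using that unfolding F_def Phi_def by simp
  have FV: "F v \<in> Dverts k l" if v: "v \<in> Dverts k l" for v
  proof (cases v)
    case (Pair i j)
    then have j: "j < l" using v unfolding Dverts_def by auto
    have ik: "i < k" using v Pair unfolding Dverts_def by auto
    have Fv: "F v = (if i \<in> A j then (\<sigma> j i, Suc j mod l) else (i, j))" using F v Pair by simp
    show ?thesis
    proof (cases "i \<in> A j")
      case True
      then have "\<sigma> j i \<in> A (Suc j mod l)" using Q_D(3)[OF Q j] by simp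
      moreover have "Suc j mod l < l" using l by simp
      moreover have "A (Suc j mod l) \<subseteq> {..<k}" using Q_D(1)[OF Q \<open>Suc j mod l < l\<close>] .
      ultimately show ?thesis using Fv True unfolding Dverts_def by auto
    next
      case False then show ?thesis using Fv v Pair by simp
    qed
  qed
  have ext: "F \<in> extensional (Dverts k l)" unfolding F_def Phi_def by simp
  have inj: "inj_on F (Dverts k l)"
  proof (rule inj_onI)
    fix u w assume u: "u \<in> Dverts k l" and w: "w \<in> Dverts k l" and e0: "F u = F w"
    obtain i j where ij: "u = (i, j)" by (cases u)
    obtain i' j' where ij': "w = (i', j')" by (cases w)
    have e: "(if i \<in> A j then (\<sigma> j i, Suc j mod l) else (i, j)) = (if i' \<in> A j' then (\<sigma> j' i', Suc j' mod l) else (i', j'))"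
      using e0 F[of i j] F[of i' j'] u w ij ij' by simp
    have jl: "j < l" "j' < l" "i < k" "i' < k" using u w ij ij' unfolding Dverts_def by auto
    show "u = w"
    proof (cases "i \<in> A j"; cases "i' \<in> A j'")
      assume a: "i \<in> A j" "i' \<in> A j'"
      then have "Suc j mod l = Suc j' mod l" "\<sigma> j i = \<sigma> j' i'" using e by auto
      then have "j = j'" "\<sigma> j i = \<sigma> j i'" using Suc_mod_inj jl by auto
      then show ?thesis using Q_D(4)[OF Q jl(1)] a ij ij' by (auto dest: inj_onD)
    next
      assume a: "i \<in> A j" "i' \<notin> A j'"
      then have "j' = Suc j mod l" "i' = \<sigma> j i" using e by auto
      then show ?thesis using a Q_D(3)[OF Q jl(1)] by auto
    next
      assume a: "i \<notin> A j" "i' \<in> A j'"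
      then have "j = Suc j' mod l" "i = \<sigma> j' i'" using e by auto
      then show ?thesis using a Q_D(3)[OF Q jl(2)] by auto
    next
      assume a: "i \<notin> A j" "i' \<notin> A j'"
      then show ?thesis using e ij ij' by auto
    qed
  qed
  have img: "F ` Dverts k l = Dverts k l"
    by (rule endo_inj_surj) (use FV inj in auto)
  have arc: "F v = v \<or> (v, F v) \<in> Darcs k l" if v: "v \<in> Dverts k l" for v
  proof (cases v)
    case (Pair i j)
    show ?thesis using F[of i j] v FV[OF v] Pair unfolding Darcs_def by auto
  qed
  show ?thesis unfolding F_def[symmetric] digraph_perms_def bij_betw_def
    using FV ext inj img arc by (auto simp: PiE_def Pi_def)
qed

lemma AF_Phi:
  assumes Q: "(A, \<sigma>) \<in> Q k l s" and l: "2 \<le> l" and j: "j < l"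
  shows "AF k (Phi k l (A, \<sigma>)) j = A j"
  using Q_D(1,3)[OF Q j] Suc_mod_neq[OF l j] j unfolding AF_def Phi_def Dverts_def by auto

lemma Psi_Phi:
  assumes Q: "(A, \<sigma>) \<in> Q k l s" and l: "2 \<le> l"
  shows "Psi k l (Phi k l (A, \<sigma>)) = (A, \<sigma>)"
proof -
  have 1: "(\<lambda>j\<in>{..<l}. AF k (Phi k l (A, \<sigma>)) j) = A"
  proof
    fix j show "(\<lambda>j\<in>{..<l}. AF k (Phi k l (A, \<sigma>)) j) j = A j"
    proof (cases "j < l")
      case True then show ?thesis using AF_Phi[OF Q l, of j] by simp
    next
      case False then show ?thesis using extensional_arb[OF Q_D(5)[OF Q, of 0]] l by simp
    qed
  qed
  have 2: "(\<lambda>j\<in>{..<l}. \<lambda>i\<in>AF k (Phi k l (A, \<sigma>)) j. fst (Phi k l (A, \<sigma>) (i, j))) = \<sigma>"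
  proof
    fix j show "(\<lambda>j\<in>{..<l}. \<lambda>i\<in>AF k (Phi k l (A, \<sigma>)) j. fst (Phi k l (A, \<sigma>) (i, j))) j = \<sigma> j"
    proof (cases "j < l")
      case True
      show ?thesis
      proof
        fix i show "(\<lambda>j\<in>{..<l}. \<lambda>i\<in>AF k (Phi k l (A, \<sigma>)) j. fst (Phi k l (A, \<sigma>) (i, j))) j i = \<sigma> j i"
          using True AF_Phi[OF Q l True] Q_D(1,7)[OF Q True]
          unfolding Phi_def Dverts_def by (auto simp: extensional_def)
      qed
    next
      case False then show ?thesis using extensional_arb[OF Q_D(6)[OF Q, of 0]] l by simp
    qed
  qed
  show ?thesis unfolding Psi_def 1 2 ..
qed

lemma Phi_Psi:
  assumes f: "f \<in> PP k l" and l: "2 \<le> l"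
  shows "Phi k l (Psi k l f) = f"
proof
  fix v
  show "Phi k l (Psi k l f) v = f v"
  proof (cases "v \<in> Dverts k l")
    case False
    then show ?thesis using PiE_arb[OF PP_D(1)[OF f] False] unfolding Phi_def Psi_def by simp
  next
    case True
    obtain i j where v: "v = (i, j)" by (cases v)
    have jl: "j < l" "i < k" using True v unfolding Dverts_def by auto
    show ?thesis
    proof (cases "i \<in> AF k f j")
      case True
      then show ?thesis using AF_step(1)[OF f True jl(1)] \<open>v \<in> Dverts k l\<close> v jl
        unfolding Phi_def Psi_def by simp
    next
      case False
      then have "f (i, j) = (i, j)" using jl unfolding AF_def by auto
      then show ?thesis using False \<open>v \<in> Dverts k l\<close> v jl unfolding Phi_def Psi_def by simp
    qed
  qed
qed

lemma Psi_Q: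
  assumes f: "f \<in> Ps k l s" and l: "2 \<le> l"
  shows "Psi k l f \<in> Q k l s"
proof -
  have fP: "f \<in> PP k l" and c0: "card (AF k f 0) = s" using f unfolding Ps_def by auto
  have "(\<lambda>j\<in>{..<l}. AF k f j) \<in> PiE {..<l} (\<lambda>_. Ss k s)"
    using AF_card[OF fP l] c0 unfolding Ss_def AF_def by auto
  moreover have "(\<lambda>j\<in>{..<l}. \<lambda>i\<in>AF k f j. fst (f (i, j))) \<in>
      PiE {..<l} (\<lambda>j. Inj ((\<lambda>j\<in>{..<l}. AF k f j) j) ((\<lambda>j\<in>{..<l}. AF k f j) (Suc j mod l)))"
  proof -
    have "(\<lambda>i\<in>AF k f j. fst (f (i, j))) \<in> Inj (AF k f j) (AF k f (Suc j mod l))" if j: "j < l" for j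
      using AF_bij[OF fP l j] unfolding Inj_def bij_betw_def by auto
    then show ?thesis using l by auto
  qed
  ultimately show ?thesis unfolding Q_def Psi_def by auto
qed

lemma Phi_Ps:
  assumes Q: "x \<in> Q k l s" and l: "2 \<le> l"
  shows "Phi k l x \<in> Ps k l s"
proof -
  obtain A \<sigma> where x: "x = (A, \<sigma>)" by (cases x)
  have "card (AF k (Phi k l (A, \<sigma>)) 0) = s"
    using AF_Phi[OF Q[unfolded x] l, of 0] Q_D(2)[OF Q[unfolded x], of 0] l by simp
  then show ?thesis using Phi_PP[OF Q[unfolded x] l] x unfolding Ps_def by simp
qed

lemma card_Ps:
  assumes l: "2 \<le> l"
  shows "card (Ps k l s) = card (Q k l s)"
proof -
  have "bij_betw (Phi k l) (Q k l s) (Ps k l s)"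
  proof (rule bij_betw_byWitness[where f'="Psi k l"])
    show "\<forall>a\<in>Q k l s. Psi k l (Phi k l a) = a" using Psi_Phi l by force
    show "\<forall>a'\<in>Ps k l s. Phi k l (Psi k l a') = a'" using Phi_Psi l unfolding Ps_def by force
    show "Phi k l ` Q k l s \<subseteq> Ps k l s" using Phi_Ps l by blast
    show "Psi k l ` Ps k l s \<subseteq> Q k l s" using Psi_Q l by blast
  qed
  then show ?thesis by (simp add: bij_betw_same_card)
qed

lemma card_Q:
  shows "card (Q k l s) = (k choose s) ^ l * fact s ^ l"
proof -
  have fin: "finite (PiE {..<l} (\<lambda>_. Ss k s))" unfolding Ss_def by (intro finite_PiE) auto
  have finA: "finite (A j)" if "A \<in> PiE {..<l} (\<lambda>_. Ss k s)" "j < l" for A j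
  proof -
    have "A j \<subseteq> {..<k}" using that unfolding Ss_def by auto
    then show ?thesis by (rule finite_subset) simp
  qed
  have "card (Q k l s) = (\<Sum>A\<in>PiE {..<l} (\<lambda>_. Ss k s). card (PiE {..<l} (\<lambda>j. Inj (A j) (A (Suc j mod l)))))"
    unfolding Q_def by (rule card_SigmaI) (use fin finA in \<open>auto intro!: finite_PiE finite_Inj\<close>)
  also have "\<dots> = (\<Sum>A\<in>PiE {..<l} (\<lambda>_. Ss k s). fact s ^ l)"
  proof (rule sum.cong[OF refl])
    fix A assume A: "A \<in> PiE {..<l} (\<lambda>_. Ss k s)"
    have "card (PiE {..<l} (\<lambda>j. Inj (A j) (A (Suc j mod l)))) = (\<Prod>j<l. card (Inj (A j) (A (Suc j mod l))))"
      by (simp add: card_PiE)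
    also have "\<dots> = (\<Prod>j<l. fact s)"
    proof (rule prod.cong[OF refl])
      fix j assume j: "j \<in> {..<l}"
      then have "Suc j mod l < l" by simp
      then have "A j \<in> Ss k s" "A (Suc j mod l) \<in> Ss k s" using A j by auto
      then show "card (Inj (A j) (A (Suc j mod l))) = fact s"
        unfolding Ss_def by (intro card_Inj) (auto intro: finite_subset)
    qed
    finally show "card (PiE {..<l} (\<lambda>j. Inj (A j) (A (Suc j mod l)))) = fact s ^ l" by simp
  qed
  also have "\<dots> = card (PiE {..<l} (\<lambda>_. Ss k s)) * fact s ^ l" by simp
  also have "card (PiE {..<l} (\<lambda>_. Ss k s)) = (k choose s) ^ l"
    by (simp add: card_PiE Ss_def n_subsets)
  finally show ?thesis .
qed



definition moved :: "'a set \<Rightarrow> ('a \<Rightarrow> 'a) \<Rightarrow> 'a set" where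
  "moved V f = {v \<in> V. f v \<noteq> v}"

lemma finite_PP: "finite (PP k l)"
proof -
  have "PP k l \<subseteq> Dverts k l \<rightarrow>\<^sub>E Dverts k l" unfolding digraph_perms_def by auto
  then show ?thesis by (rule finite_subset) (simp add: finite_PiE)
qed

lemma card_moved:
  assumes f: "f \<in> Ps k l s" and l: "2 \<le> l"
  shows "card (moved (Dverts k l) f) = l * s"
proof -
  have fP: "f \<in> PP k l" and c0: "card (AF k f 0) = s" using f unfolding Ps_def by auto
  have eq: "moved (Dverts k l) f = (\<lambda>(j, i). (i, j)) ` (SIGMA j:{..<l}. AF k f j)"
    unfolding moved_def AF_def Dverts_def by force
  have "inj_on (\<lambda>(j, i). (i, j)) (SIGMA j:{..<l}. AF k f j)" by (auto simp: inj_on_def)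
  then have "card (moved (Dverts k l) f) = card (SIGMA j:{..<l}. AF k f j)"
    unfolding eq by (rule card_image)
  also have "\<dots> = (\<Sum>j<l. card (AF k f j))"
    by (rule card_SigmaI) (auto simp: AF_def)
  also have "\<dots> = (\<Sum>j<l. s)" using AF_card[OF fP l] c0 by simp
  finally show ?thesis by simp
qed

lemma sum_PP:
  fixes h :: "nat \<Rightarrow> real"
  assumes l: "2 \<le> l"
  shows "(\<Sum>f\<in>PP k l. h (card (moved (Dverts k l) f))) = (\<Sum>s\<le>k. real ((k choose s) ^ l * fact s ^ l) * h (l * s))"
proof -
  have img: "(\<lambda>f. card (AF k f 0)) ` PP k l \<subseteq> {..k}"
  proof
    fix x assume "x \<in> (\<lambda>f. card (AF k f 0)) ` PP k l"
    then obtain f where "x = card (AF k f 0)" by auto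
    moreover have "AF k f 0 \<subseteq> {..<k}" unfolding AF_def by auto
    ultimately show "x \<in> {..k}" using card_mono[of "{..<k}" "AF k f 0"] by auto
  qed
  have "(\<Sum>f\<in>PP k l. h (card (moved (Dverts k l) f))) =
      (\<Sum>s\<le>k. \<Sum>f\<in>{f. f \<in> PP k l \<and> card (AF k f 0) = s}. h (card (moved (Dverts k l) f)))"
    by (rule sum.group[symmetric]) (use finite_PP img in auto)
  also have "\<dots> = (\<Sum>s\<le>k. \<Sum>f\<in>Ps k l s. h (l * s))"
  proof (rule sum.cong[OF refl])
    fix s
    show "(\<Sum>f\<in>{f. f \<in> PP k l \<and> card (AF k f 0) = s}. h (card (moved (Dverts k l) f))) = (\<Sum>f\<in>Ps k l s. h (l * s))"
      unfolding Ps_def[symmetric] using card_moved[OF _ l]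
      by (intro sum.cong) (auto simp: Ps_def)
  qed
  also have "\<dots> = (\<Sum>s\<le>k. real ((k choose s) ^ l * fact s ^ l) * h (l * s))"
    using card_Ps[OF l] card_Q by simp
  finally show ?thesis .
qed

lemma subsets_containing:
  assumes D: "finite D" and B: "B \<subseteq> D" "card B \<le> m"
  shows "card {E. (E \<subseteq> D \<and> card E = m) \<and> B \<subseteq> E} = (card D - card B) choose (m - card B)"
proof -
  have fB: "finite B" using D B finite_subset by blast
  have "bij_betw (\<lambda>E. E - B) {E. (E \<subseteq> D \<and> card E = m) \<and> B \<subseteq> E} {F. F \<subseteq> D - B \<and> card F = m - card B}"
  proof (rule bij_betw_byWitness[where f'="\<lambda>F. F \<union> B"])
    show "\<forall>a\<in>{E. (E \<subseteq> D \<and> card E = m) \<and> B \<subseteq> E}. a - B \<union> B = a" by auto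
    show "\<forall>a'\<in>{F. F \<subseteq> D - B \<and> card F = m - card B}. a' \<union> B - B = a'" by auto
    show "(\<lambda>E. E - B) ` {E. (E \<subseteq> D \<and> card E = m) \<and> B \<subseteq> E} \<subseteq> {F. F \<subseteq> D - B \<and> card F = m - card B}"
    proof (rule image_subsetI)
      fix E assume "E \<in> {E. (E \<subseteq> D \<and> card E = m) \<and> B \<subseteq> E}"
      then have E: "E \<subseteq> D" "B \<subseteq> E" "card E = m" by auto
      then show "E - B \<in> {F. F \<subseteq> D - B \<and> card F = m - card B}"
        using fB by (auto simp: card_Diff_subset)
    qed
    show "(\<lambda>F. F \<union> B) ` {F. F \<subseteq> D - B \<and> card F = m - card B} \<subseteq> {E. (E \<subseteq> D \<and> card E = m) \<and> B \<subseteq> E}"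
    proof (rule image_subsetI)
      fix F assume "F \<in> {F. F \<subseteq> D - B \<and> card F = m - card B}"
      then have F: "F \<subseteq> D - B" "card F = m - card B" by auto
      have "finite F" using F D finite_subset by blast
      moreover have "F \<inter> B = {}" using F by auto
      ultimately have "card (F \<union> B) = card F + card B" using fB by (simp add: card_Un_disjoint)
      then show "F \<union> B \<in> {E. (E \<subseteq> D \<and> card E = m) \<and> B \<subseteq> E}" using F B by auto
    qed
  qed
  then have "card {E. (E \<subseteq> D \<and> card E = m) \<and> B \<subseteq> E} = card {F. F \<subseteq> D - B \<and> card F = m - card B}"
    by (rule bij_betw_same_card)
  also have "\<dots> = card (D - B) choose (m - card B)" using D by (simp add: n_subsets)
  also have "card (D - B) = card D - card B" using B fB by (simp add: card_Diff_subset)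
  finally show ?thesis .
qed

lemma perms_sub:
  assumes "E \<subseteq> Darcs k l"
  shows "digraph_perms (Dverts k l) E = {f \<in> PP k l. (\<lambda>v. (v, f v)) ` moved (Dverts k l) f \<subseteq> E}"
  using assms unfolding digraph_perms_def moved_def by auto

lemma double_count:
  assumes "finite S" "finite T"
  shows "(\<Sum>x\<in>S. card {y \<in> T. R x y}) = (\<Sum>y\<in>T. card {x \<in> S. R x y})"
proof -
  have "(\<Sum>x\<in>S. card {y \<in> T. R x y}) = (\<Sum>x\<in>S. \<Sum>y\<in>T. if R x y then 1 else 0)"
    by (simp only: card_eq_sum sum.inter_filter[OF assms(2)] sum.inter_filter[OF assms(1)])
  also have "\<dots> = (\<Sum>y\<in>T. \<Sum>x\<in>S. if R x y then 1 else 0)" by (rule sum.swap)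
  also have "\<dots> = (\<Sum>y\<in>T. card {x \<in> S. R x y})"
    by (simp only: card_eq_sum sum.inter_filter[OF assms(2)] sum.inter_filter[OF assms(1)])
  finally show ?thesis .
qed

lemma EY_sum:
  assumes l: "2 \<le> l" and km: "k * l \<le> m" and mN: "m \<le> k\<^sup>2 * l"
  shows "measure_pmf.expectation (pmf_of_set (subgraphs_m k l m)) (\<lambda>E. real (card (digraph_perms (Dverts k l) E)))
    = (\<Sum>f\<in>PP k l. real ((k\<^sup>2 * l - card (moved (Dverts k l) f)) choose (m - card (moved (Dverts k l) f))))
      / real ((k\<^sup>2 * l) choose m)"
proof -
  let ?S = "subgraphs_m k l m"
  let ?V = "Dverts k l" and ?D = "Darcs k l"
  let ?arcs = "\<lambda>f. (\<lambda>v. (v, f v)) ` moved ?V f"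
  have cD: "card ?D = k\<^sup>2 * l" using card_Darcs l by simp
  have finS: "finite ?S" unfolding subgraphs_m_def
    by (rule finite_subset[of _ "Pow ?D"]) auto
  have cS: "card ?S = (k\<^sup>2 * l) choose m" unfolding subgraphs_m_def using n_subsets[of ?D m] cD by simp
  have "card ?S > 0" using cS mN by simp
  then have neS: "?S \<noteq> {}" by auto
  have "measure_pmf.expectation (pmf_of_set ?S) (\<lambda>E. real (card (digraph_perms ?V E)))
      = (\<Sum>E\<in>?S. real (card (digraph_perms ?V E))) / real (card ?S)"
    by (rule integral_pmf_of_set[OF neS finS])
  also have "(\<Sum>E\<in>?S. real (card (digraph_perms ?V E))) = real (\<Sum>E\<in>?S. card {f \<in> PP k l. ?arcs f \<subseteq> E})"
    unfolding of_nat_sum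
  proof (rule sum.cong[OF refl])
    fix E assume "E \<in> ?S"
    then have "E \<subseteq> ?D" by (simp add: subgraphs_m_def)
    then have eq: "digraph_perms ?V E = {f \<in> PP k l. ?arcs f \<subseteq> E}" by (rule perms_sub)
    show "real (card (digraph_perms ?V E)) = real (card {f \<in> PP k l. ?arcs f \<subseteq> E})"
      by (subst eq) (rule refl)
  qed
  also have "(\<Sum>E\<in>?S. card {f \<in> PP k l. ?arcs f \<subseteq> E}) = (\<Sum>f\<in>PP k l. card {E \<in> ?S. ?arcs f \<subseteq> E})"
    by (rule double_count[OF finS finite_PP])
  also have "\<dots> = (\<Sum>f\<in>PP k l. (k\<^sup>2 * l - card (moved ?V f)) choose (m - card (moved ?V f)))"
  proof (rule sum.cong[OF refl])
    fix f assume f: "f \<in> PP k l"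
    have ca: "card (?arcs f) = card (moved ?V f)"
      by (rule card_image) (auto simp: inj_on_def)
    have sub: "?arcs f \<subseteq> ?D" using f unfolding digraph_perms_def moved_def by auto
    have "card (moved ?V f) \<le> card ?V" by (rule card_mono) (auto simp: moved_def)
    then have le: "card (?arcs f) \<le> m" using ca km card_Dverts by simp
    have "card {E \<in> ?S. ?arcs f \<subseteq> E} = card {E. (E \<subseteq> ?D \<and> card E = m) \<and> ?arcs f \<subseteq> E}"
      unfolding subgraphs_m_def by simp
    also have "\<dots> = (card ?D - card (?arcs f)) choose (m - card (?arcs f))"
      by (rule subsets_containing[OF finite_Darcs sub le])
    finally show "card {E \<in> ?S. ?arcs f \<subseteq> E} = (k\<^sup>2 * l - card (moved ?V f)) choose (m - card (moved ?V f))"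
      using ca cD by simp
  qed
  finally show ?thesis unfolding cS by simp
qed



lemma binom_ratio:
  assumes "n \<le> m" "m \<le> N"
  shows "real ((N - n) choose (m - n)) / real (N choose m) = (\<Prod>i<n. (real m - real i) / (real N - real i))"
  using assms(1)
proof (induction n)
  case 0
  have "N choose m > 0" using assms(2) by simp
  then show ?case by simp
next
  case (Suc n)
  have nm: "n < m" using Suc.prems by simp
  have key: "(m - n) * ((N - n) choose (m - n)) = (N - n) * ((N - Suc n) choose (m - Suc n))"
  proof -
    have "m - n = Suc (m - Suc n)" using nm by simp
    then have "(m - n) * ((N - n) choose (m - n)) = (N - n) * ((N - n - 1) choose (m - Suc n))"
      using binomial_absorption[of "m - Suc n" "N - n"] by simp
    moreover have "N - n - 1 = N - Suc n" by simp
    ultimately show ?thesis by simp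
  qed
  have Nn: "real N - real n > 0" using nm assms(2) by simp
  have mn: "real (m - n) = real m - real n" "real (N - n) = real N - real n"
    using nm assms(2) by (auto simp: of_nat_diff)
  have "real (m - n) * real ((N - n) choose (m - n)) = real (N - n) * real ((N - Suc n) choose (m - Suc n))"
    using arg_cong[OF key, of real] by (simp only: of_nat_mult)
  then have "(real m - real n) * real ((N - n) choose (m - n)) = (real N - real n) * real ((N - Suc n) choose (m - Suc n))"
    by (simp only: mn)
  then have "real ((N - Suc n) choose (m - Suc n)) = real ((N - n) choose (m - n)) * (real m - real n) / (real N - real n)"
    using Nn by (simp add: field_simps)
  then have "real ((N - Suc n) choose (m - Suc n)) / real (N choose m) =
      real ((N - n) choose (m - n)) / real (N choose m) * ((real m - real n) / (real N - real n))"
    by simp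
  also have "\<dots> = (\<Prod>i<Suc n. (real m - real i) / (real N - real i))"
    using Suc.IH nm by simp
  finally show ?case .
qed

lemma RR_eq:
  assumes p: "0 < p"
  shows "(\<Prod>i<n. (real (mm l p k) - real i) / (real (k\<^sup>2 * l) - real i)) = p ^ n * RR l p k n"
proof -
  have e: "(real (mm l p k) - real i) / (real (k\<^sup>2 * l) - real i) = p * ((real (mm l p k) - real i) / (p * (real (k\<^sup>2 * l) - real i)))" for i
    using p by simp
  show ?thesis unfolding RR_def e prod.distrib by simp
qed

lemma EY_formula:
  assumes l: "2 \<le> l" and p: "0 < p" "p < 1" and km: "k * l \<le> mm l p k" and kl: "k * l < k\<^sup>2 * l"
  shows "EY l p k = fact k ^ l * p ^ (k * l) * (\<Sum>t\<le>k. ((1 / p) ^ t / fact t) ^ l * RR l p k ((k - t) * l))"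
proof -
  let ?m = "mm l p k" and ?N = "k\<^sup>2 * l"
  have mN: "?m \<le> ?N"
  proof -
    have "real ?m \<le> p * real ?N" by (rule mm_bounds(1)[OF p(1)])
    also have "\<dots> \<le> real ?N" using p by (simp add: mult_left_le_one_le)
    finally show ?thesis by (simp only: of_nat_le_iff)
  qed
  have "EY l p k = (\<Sum>f\<in>PP k l. real ((?N - card (moved (Dverts k l) f)) choose (?m - card (moved (Dverts k l) f)))) / real (?N choose ?m)"
    unfolding EY_def mm_def[symmetric] using EY_sum[OF l km mN] by simp
  also have "(\<Sum>f\<in>PP k l. real ((?N - card (moved (Dverts k l) f)) choose (?m - card (moved (Dverts k l) f))))
      = (\<Sum>s\<le>k. real ((k choose s) ^ l * fact s ^ l) * real ((?N - l * s) choose (?m - l * s)))"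
    by (rule sum_PP[OF l])
  also have "\<dots> / real (?N choose ?m) = (\<Sum>s\<le>k. real ((k choose s) ^ l * fact s ^ l) * (real ((?N - l * s) choose (?m - l * s)) / real (?N choose ?m)))"
    by (simp add: sum_divide_distrib)
  also have "\<dots> = (\<Sum>s\<le>k. (fact k / fact (k - s)) ^ l * (p ^ (l * s) * RR l p k (l * s)))"
  proof (rule sum.cong[OF refl])
    fix s assume s: "s \<in> {..k}"
    have ls: "l * s \<le> ?m" using s km by (metis atMost_iff le_trans mult.commute mult_le_mono2)
    have "real ((k choose s) ^ l * fact s ^ l) = (real (k choose s) * fact s) ^ l"
      by (simp add: power_mult_distrib)
    also have "real (k choose s) * fact s = fact k / fact (k - s)"
      using s by (simp add: binomial_fact)
    finally have 1: "real ((k choose s) ^ l * fact s ^ l) = (fact k / fact (k - s)) ^ l" .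
    have 2: "real ((?N - l * s) choose (?m - l * s)) / real (?N choose ?m) = p ^ (l * s) * RR l p k (l * s)"
      using binom_ratio[OF ls mN] RR_eq[OF p(1)] by simp
    show "real ((k choose s) ^ l * fact s ^ l) * (real ((?N - l * s) choose (?m - l * s)) / real (?N choose ?m))
        = (fact k / fact (k - s)) ^ l * (p ^ (l * s) * RR l p k (l * s))"
      using 1 2 by simp
  qed
  also have "\<dots> = (\<Sum>t\<le>k. (fact k / fact (k - (k - t))) ^ l * (p ^ (l * (k - t)) * RR l p k (l * (k - t))))"
    by (rule sum.reindex_bij_witness[where i="\<lambda>t. k - t" and j="\<lambda>t. k - t"]) auto
  also have "\<dots> = (\<Sum>t\<le>k. fact k ^ l * p ^ (k * l) * (((1 / p) ^ t / fact t) ^ l * RR l p k ((k - t) * l)))"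
  proof (rule sum.cong[OF refl])
    fix t assume t: "t \<in> {..k}"
    have kt: "k - (k - t) = t" using t by simp
    have pe: "p ^ (k * l) = p ^ (l * (k - t)) * p ^ (t * l)"
      using t by (simp add: power_add[symmetric] algebra_simps diff_mult_distrib2)
    show "(fact k / fact (k - (k - t))) ^ l * (p ^ (l * (k - t)) * RR l p k (l * (k - t))) =
        fact k ^ l * p ^ (k * l) * (((1 / p) ^ t / fact t) ^ l * RR l p k ((k - t) * l))"
      unfolding kt pe using p
      by (simp add: power_divide power_mult_distrib power_mult[symmetric] mult.commute[of t l] mult.commute[of "k - t" l] field_simps)
  qed
  also have "\<dots> = fact k ^ l * p ^ (k * l) * (\<Sum>t\<le>k. ((1 / p) ^ t / fact t) ^ l * RR l p k ((k - t) * l))"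
    by (simp add: sum_distrib_left)
  finally show ?thesis .
qed



lemma summable_M:
  fixes p :: real
  assumes p: "0 < p" and l: "1 \<le> l"
  shows "summable (\<lambda>t. ((1 / p) ^ t / fact t) ^ l)"
proof -
  let ?b = "\<lambda>t::nat. (1 / p) ^ t / fact t"
  have sb: "summable ?b" using summable_exp[of "1/p"] by (simp add: field_simps)
  then have "?b \<longlonglongrightarrow> 0" by (rule summable_LIMSEQ_zero)
  then have "eventually (\<lambda>t. ?b t < 1) at_top" by (rule order_tendstoD(2)) simp
  then have "eventually (\<lambda>t. norm (?b t ^ l) \<le> ?b t) at_top"
  proof (rule eventually_mono)
    fix t assume "?b t < 1"
    moreover have "0 \<le> ?b t" using p by simp
    ultimately have "?b t ^ l \<le> ?b t ^ 1" by (intro power_decreasing l) auto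
    then show "norm (?b t ^ l) \<le> ?b t" using \<open>0 \<le> ?b t\<close> by simp
  qed
  then show ?thesis using sb by (rule summable_comparison_test_ev)
qed

lemma f_ell_eq: "f_ell l x = (\<Sum>t. (x ^ t / fact t) ^ l)"
  unfolding f_ell_def by (simp add: power_divide power_mult)

lemma S_lim:
  assumes l: "2 \<le> l" and p: "0 < p" "p < 1"
  shows "(\<lambda>k. \<Sum>t\<le>k. ((1 / p) ^ t / fact t) ^ l * RR l p k ((k - t) * l))
     \<longlonglongrightarrow> (\<Sum>t. ((1 / p) ^ t / fact t) ^ l * exp (real l / 2 * (1 - 1 / p)))"
proof -
  define M where "M = (\<lambda>t::nat. ((1 / p) ^ t / fact t) ^ l)"
  define a where "a = (\<lambda>t k. if t \<le> k then M t * RR l p k ((k - t) * l) else 0)"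
  let ?c = "exp (real l / 2 * (1 - 1 / p))"
  have l0: "0 < l" using l by simp
  have Mnn: "0 \<le> M t" for t unfolding M_def using p by simp
  have lim: "(\<lambda>k. a t k) \<longlonglongrightarrow> M t * ?c" for t
  proof -
    have "(\<lambda>k. M t * RR l p k ((k - t) * l)) \<longlonglongrightarrow> M t * ?c"
      by (intro tendsto_mult tendsto_const RR_lim p l0)
    moreover have "eventually (\<lambda>k. M t * RR l p k ((k - t) * l) = a t k) at_top"
      using eventually_ge_at_top[of t] by eventually_elim (simp add: a_def)
    ultimately show ?thesis by (rule Lim_transform_eventually)
  qed
  have bnd: "eventually (\<lambda>(t, k). norm (a t k) \<le> M t) (at_top \<times>\<^sub>F at_top)"
  proof -
    have "eventually (\<lambda>k. \<forall>t. norm (a t k) \<le> M t) at_top"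
      using eventually_km[OF p l0]
    proof eventually_elim
      case (elim k)
      show ?case
      proof
        fix t
        show "norm (a t k) \<le> M t"
        proof (cases "t \<le> k")
          case True
          have n: "(k - t) * l \<le> k * l" by simp
          have "0 \<le> RR l p k ((k - t) * l)" "RR l p k ((k - t) * l) \<le> 1"
            using RR_bounds[OF p n] elim by auto
          then show ?thesis using True Mnn[of t] unfolding a_def
            by (simp add: abs_mult mult_left_le)
        next
          case False then show ?thesis using Mnn[of t] unfolding a_def by simp
        qed
      qed
    qed
    then have "eventually (\<lambda>(t'::nat, k). \<forall>t. norm (a t k) \<le> M t) (at_top \<times>\<^sub>F at_top)"
      by (subst eventually_prod2) (simp_all add: trivial_limit_sequentially)
    then show ?thesis by (rule eventually_mono) auto
  qed
  have sM: "summable M" unfolding M_def using summable_M[OF p(1)] l by simp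
  have "(\<lambda>k. suminf (\<lambda>t. a t k)) \<longlonglongrightarrow> suminf (\<lambda>t. M t * ?c)"
    using tannerys_theorem[OF lim bnd sM] by simp
  moreover have "suminf (\<lambda>t. a t k) = (\<Sum>t\<le>k. M t * RR l p k ((k - t) * l))" for k
    by (subst suminf_finite[of "{..k}"]) (auto simp: a_def)
  ultimately show ?thesis unfolding M_def by simp
qed

theorem mainTheorem6:
  fixes l :: nat and p :: real
  assumes "l \<ge> 2" and "0 < p" and "p < 1"
  shows "(\<lambda>k. EY l p k) \<sim>[at_top]
    (\<lambda>k. (fact k) ^ l * p ^ (k * l) * exp (real l / 2 * (1 - 1 / p)) * f_ell l (1 / p))"
proof -
  note l = assms(1) and p = assms(2,3)
  have l0: "0 < l" using l by simp
  let ?c = "exp (real l / 2 * (1 - 1 / p))"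
  let ?S = "\<lambda>k. \<Sum>t\<le>k. ((1 / p) ^ t / fact t) ^ l * RR l p k ((k - t) * l)"
  define F where "F = f_ell l (1 / p)"
  have sM: "summable (\<lambda>t. ((1 / p) ^ t / fact t) ^ l)" using summable_M[OF p(1)] l by simp
  have F: "F = (\<Sum>t. ((1 / p) ^ t / fact t) ^ l)" unfolding F_def f_ell_eq ..
  have "(\<Sum>t<1. ((1 / p) ^ t / fact t) ^ l) \<le> F"
    unfolding F using p by (intro sum_le_suminf sM) auto
  then have Fpos: "0 < F" by simp
  have "?S \<longlonglongrightarrow> (\<Sum>t. ((1 / p) ^ t / fact t) ^ l * ?c)" by (rule S_lim[OF l p])
  also have "(\<Sum>t. ((1 / p) ^ t / fact t) ^ l * ?c) = F * ?c"
    unfolding F by (rule suminf_mult2[symmetric, OF sM])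
  finally have Slim: "?S \<longlonglongrightarrow> F * ?c" .
  have "(\<lambda>k. ?S k / (?c * F)) \<longlonglongrightarrow> (F * ?c) / (?c * F)"
    by (intro tendsto_divide Slim tendsto_const) (use Fpos in simp)
  then have lim1: "(\<lambda>k. ?S k / (?c * F)) \<longlonglongrightarrow> 1" using Fpos by simp
  have ev: "eventually (\<lambda>k. ?S k / (?c * F) = EY l p k / ((fact k) ^ l * p ^ (k * l) * ?c * F)) at_top"
    using eventually_km[OF p l0]
  proof eventually_elim
    case (elim k)
    have "EY l p k = fact k ^ l * p ^ (k * l) * ?S k"
      using EY_formula[OF l p] elim by auto
    moreover have G: "fact k ^ l * p ^ (k * l) > (0::real)" using p by simp
    ultimately have "EY l p k / ((fact k) ^ l * p ^ (k * l) * ?c * F) =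
        (fact k ^ l * p ^ (k * l)) * ?S k / ((fact k ^ l * p ^ (k * l)) * (?c * F))"
      by (simp add: mult.assoc)
    also have "\<dots> = ?S k / (?c * F)" using G p by simp
    finally show ?case by simp
  qed
  have "(\<lambda>k. EY l p k / ((fact k) ^ l * p ^ (k * l) * ?c * F)) \<longlonglongrightarrow> 1"
    using lim1 ev by (rule Lim_transform_eventually)
  then show ?thesis unfolding F_def by (intro asymp_equivI')
qed

end
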